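(* There is an absolute constant $c$ such that for every perfect square $n=\ell^2$, the tilted grid sequence $S\in[n]^n$ satisfies $\mathrm{OPT}(S)\le c\,n$.
   Context: Tilted grid sequence: let $\ell=\sqrt n$ and consider the $n$ points $\{(i\ell+(j-1),\ j\ell+i-1): i,j\in[\ell]\}$; no two share an $x$- or $y$-coordinate. $S$ is the permutation obtained by listing the points in increasing order of $y$-coordinate (time) and replacing each point's $x$-coordinate (key) by its rank among all $x$-coordinates. Dynamic BST model: an algorithm chooses an initial BST on $[n]$. To serve each access it touches a connected set of nodes containing the root and the accessed key, may rearrange them into any BST shape, and pays the number of touched nodes. $\mathrm{OPT}(S)$ is the minimum total cost over all offline algorithms. *)

theory Defs
  imports Complex_Main "HOL-Library.Tree"
begin

text \<open>The n = l^2 points (i*l + (j-1), j*l + i - 1), i,j in [l]; first component is the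
  x-coordinate (key), second the y-coordinate (time).\<close>
definition tilted_points :: "nat \<Rightarrow> (nat \<times> nat) list" where
  "tilted_points l = [(i*l + (j-1), j*l + i - 1). i \<leftarrow> [1..<l+1], j \<leftarrow> [1..<l+1]]"

definition x_rank :: "nat \<Rightarrow> nat \<Rightarrow> nat" where
  "x_rank l x = card {x' \<in> fst ` set (tilted_points l). x' \<le> x}"

definition tilted_seq :: "nat \<Rightarrow> nat list" where
  "tilted_seq l = map (\<lambda>p. x_rank l (fst p)) (sort_key snd (tilted_points l))"

text \<open>Maximal subtrees hanging off a set T of touched nodes (recursion goes through
  T-nodes and stops at the first node not in T; empty subtrees are omitted).\<close>
fun hang :: "'a set \<Rightarrow> 'a tree \<Rightarrow> 'a tree set" where
  "hang T Leaf = {}"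
| "hang T (Node l a r) = (if a \<in> T then hang T l \<union> hang T r else {Node l a r})"

text \<open>T is a nonempty connected set of nodes containing the root.\<close>
definition is_top :: "'a set \<Rightarrow> 'a tree \<Rightarrow> bool" where
  "is_top T t \<longleftrightarrow> T \<noteq> {} \<and> T \<subseteq> set_tree t \<and> T \<inter> \<Union> (set_tree ` hang T t) = {}"

text \<open>Serving access x in tree t by touching T and rearranging T into any BST shape,
  producing t'. The untouched subtrees hanging off T are kept.\<close>
definition bst_step :: "nat tree \<Rightarrow> nat \<Rightarrow> nat set \<Rightarrow> nat tree \<Rightarrow> bool" where
  "bst_step t x T t' \<longleftrightarrow> x \<in> T \<and> is_top T t \<and> is_top T t' \<and> hang T t' = hang T t
     \<and> inorder t' = inorder t"

text \<open>An execution serving S on keys [n] = {1..n}: trees ts (ts!0 the initial BST),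
  touched sets Ts; its cost is the total number of touched nodes.\<close>
definition bst_execution :: "nat \<Rightarrow> nat list \<Rightarrow> nat tree list \<Rightarrow> nat set list \<Rightarrow> bool" where
  "bst_execution n S ts Ts \<longleftrightarrow> length ts = length S + 1 \<and> length Ts = length S
     \<and> inorder (ts ! 0) = [1..<n+1]
     \<and> (\<forall>i < length S. bst_step (ts ! i) (S ! i) (Ts ! i) (ts ! Suc i))"

definition exec_cost :: "nat set list \<Rightarrow> nat" where
  "exec_cost Ts = sum_list (map card Ts)"

definition OPT :: "nat \<Rightarrow> nat list \<Rightarrow> nat" where
  "OPT n S = (LEAST c. \<exists>ts Ts. bst_execution n S ts Ts \<and> exec_cost Ts = c)"

end

theory Submission
  imports Defs
begin


lemma tp_set: "set (tilted_points l) = {(i*l + (j-1), j*l+i-1) | i j. 1 \<le> i \<and> i \<le> l \<and> 1 \<le> j \<and> j \<le> l}"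
proof (intro equalityI subsetI)
  fix p assume "p \<in> set (tilted_points l)"
  then obtain i j where "i \<in> {1..<l+1}" "j \<in> {1..<l+1}" "p = (i*l + (j-1), j*l+i-1)"
    unfolding tilted_points_def by (simp only: set_concat set_map set_upt image_image) blast
  then show "p \<in> {(i*l + (j-1), j*l+i-1) | i j. 1 \<le> i \<and> i \<le> l \<and> 1 \<le> j \<and> j \<le> l}"
    by (intro CollectI exI[of _ i] exI[of _ j]) auto
next
  fix p assume "p \<in> {(i*l + (j-1), j*l+i-1) | i j. 1 \<le> i \<and> i \<le> l \<and> 1 \<le> j \<and> j \<le> l}"
  then obtain i j where "1 \<le> i" "i \<le> l" "1 \<le> j" "j \<le> l" "p = (i*l + (j-1), j*l+i-1)" by blast
  then have "i \<in> {1..<l+1}" "j \<in> {1..<l+1}" "p = (i*l + (j-1), j*l+i-1)" by auto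
  then show "p \<in> set (tilted_points l)" unfolding tilted_points_def by (simp only: set_concat set_map set_upt image_image) blast
qed

lemma tp_len: "length (tilted_points l) = l*l"
  unfolding tilted_points_def by (simp add: length_concat comp_def sum_list_triv)

definition PP :: "nat \<Rightarrow> (nat \<times> nat) list" where
  "PP l = map (\<lambda>k. ((k mod l + 1)*l + k div l, l + k)) [0..<l*l]"

lemma PP_set: "set (PP l) = set (tilted_points l)"
proof -
  have "set (PP l) = {((k mod l + 1)*l + k div l, l + k) | k. k < l*l}"
    unfolding PP_def by auto
  also have "\<dots> = {(i*l + (j-1), j*l+i-1) | i j. 1 \<le> i \<and> i \<le> l \<and> 1 \<le> j \<and> j \<le> l}"
  proof (intro equalityI subsetI)
    fix p assume "p \<in> {((k mod l + 1)*l + k div l, l + k) | k. k < l*l}"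
    then obtain k where k: "k < l*l" "p = ((k mod l + 1)*l + k div l, l + k)" by auto
    have l0: "l > 0" using k by (cases l) auto
    have d: "k div l < l" using k by (simp add: less_mult_imp_div_less)
    have m: "k mod l < l" using l0 by simp
    have e: "l + k = (k div l + 1) * l + (k mod l + 1) - 1"
      using div_mult_mod_eq[of k l] by (simp add: algebra_simps)
    show "p \<in> {(i*l + (j-1), j*l+i-1) | i j. 1 \<le> i \<and> i \<le> l \<and> 1 \<le> j \<and> j \<le> l}"
      apply (rule CollectI, rule exI[of _ "k mod l + 1"], rule exI[of _ "k div l + 1"])
      using k d m e by (simp add: Suc_leI)
  next
    fix p assume "p \<in> {(i*l + (j-1), j*l+i-1) | i j. 1 \<le> i \<and> i \<le> l \<and> 1 \<le> j \<and> j \<le> l}"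
    then obtain i j where ij: "1 \<le> i" "i \<le> l" "1 \<le> j" "j \<le> l" "p = (i*l + (j-1), j*l+i-1)" by auto
    define k where "k = (j-1)*l + (i-1)"
    obtain i' j' where ij': "i = Suc i'" "j = Suc j'" using ij by (cases i; cases j) auto
    have km: "k mod l = i - 1" "k div l = j - 1" using ij unfolding k_def ij' by auto
    have kl: "k < l*l"
    proof -
      have "(j-1)*l \<le> (l-1)*l" using ij by simp
      then show ?thesis unfolding k_def using ij by (cases l) (auto simp: algebra_simps)
    qed
    show "p \<in> {((k mod l + 1)*l + k div l, l + k) | k. k < l*l}"
      apply (rule CollectI, rule exI[of _ k])
      using ij km kl unfolding ij' by (auto simp: k_def algebra_simps)
  qed
  finally show ?thesis by (simp add: tp_set)
qed

lemma inj_snd_PP: "inj_on snd (set (PP l))"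
  unfolding PP_def by (auto simp: inj_on_def)

lemma sort_tp: "sort_key snd (tilted_points l) = PP l"
proof -
  have dP: "distinct (PP l)" unfolding PP_def by (auto simp: distinct_map inj_on_def)
  have "card (set (tilted_points l)) = length (tilted_points l)"
    using PP_set[of l] distinct_card[OF dP] by (simp add: tp_len PP_def)
  hence dt: "distinct (tilted_points l)" by (simp add: card_distinct)
  show ?thesis
    apply (rule map_sorted_distinct_set_unique[where f=snd])
    subgoal using inj_snd_PP[of l] PP_set[of l] by simp
    subgoal by (rule sorted_sort_key)
    subgoal using inj_snd_PP[of l] PP_set[of l] dt by (simp add: distinct_map)
    subgoal unfolding PP_def by (simp add: sorted_iff_nth_mono)
    subgoal unfolding PP_def by (simp add: distinct_map inj_on_def)
    subgoal using PP_set[of l] by simp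
    done
qed

lemma xk_bound: assumes "(k::nat) < l*l" shows "k mod l * l + k div l < l * l"
proof -
  have l0: "l > 0" using assms by (cases l) auto
  have d: "k div l < l" using assms by (simp add: less_mult_imp_div_less)
  have "k mod l \<le> l - 1" using l0 by (simp add: less_Suc_eq_le[symmetric])
  hence "k mod l * l \<le> (l-1)*l" by simp
  also have "(l-1)*l = l*l - l" by (simp add: algebra_simps)
  finally show ?thesis using d l0 by (cases l) auto
qed

lemma fst_tp: "fst ` set (tilted_points l) = {l..<l*l+l}"
proof -
  have "fst ` set (tilted_points l) = fst ` set (PP l)" by (simp add: PP_set)
  also have "\<dots> = (\<lambda>k. (k mod l + 1)*l + k div l) ` {..<l*l}"
    unfolding PP_def by (auto simp: image_image)
  also have "\<dots> = {l..<l*l+l}"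
  proof (intro equalityI subsetI)
    fix x assume "x \<in> (\<lambda>k. (k mod l + 1)*l + k div l) ` {..<l*l}"
    then obtain k where k: "k < l*l" "x = (k mod l + 1)*l + k div l" by auto
    show "x \<in> {l..<l*l+l}" using xk_bound[OF k(1)] k by (simp add: algebra_simps)
  next
    fix x assume x: "x \<in> {l..<l*l+l}"
    define y where "y = x - l"
    have y: "y < l*l" "x = y + l" using x by (auto simp: y_def)
    have l0: "l > 0" using y by (cases l) auto
    define k where "k = y mod l * l + y div l"
    have yd: "y div l < l" using y by (simp add: less_mult_imp_div_less)
    have km: "k mod l = y div l" "k div l = y mod l" using yd l0 by (auto simp: k_def)
    have "k < l*l" unfolding k_def by (rule xk_bound[OF y(1), simplified km])
    moreover have "x = (k mod l + 1)*l + k div l"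
      using km y div_mult_mod_eq[of y l] by (simp add: algebra_simps)
    ultimately show "x \<in> (\<lambda>k. (k mod l + 1)*l + k div l) ` {..<l*l}" by auto
  qed
  finally show ?thesis .
qed

lemma x_rank_eq: assumes "l \<le> x" "x < l*l+l" shows "x_rank l x = x + 1 - l"
proof -
  have "{x' \<in> fst ` set (tilted_points l). x' \<le> x} = {l..x}" using assms by (auto simp: fst_tp)
  thus ?thesis unfolding x_rank_def by simp
qed

lemma tilted_seq_eq: "tilted_seq l = map (\<lambda>k. k mod l * l + k div l + 1) [0..<l*l]"
proof -
  have "tilted_seq l = map (\<lambda>p. x_rank l (fst p)) (PP l)" unfolding tilted_seq_def sort_tp ..
  also have "\<dots> = map (\<lambda>k. k mod l * l + k div l + 1) [0..<l*l]"
    unfolding PP_def map_map comp_def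
  proof (rule map_cong[OF refl])
    fix k assume "k \<in> set [0..<l*l]"
    hence k: "k < l*l" by simp
    then show "x_rank l (fst ((k mod l + 1)*l + k div l, l + k)) = k mod l * l + k div l + 1"
      using xk_bound[OF k] by (simp add: x_rank_eq algebra_simps)
  qed
  finally show ?thesis .
qed




fun ok :: "'a set \<Rightarrow> 'a tree \<Rightarrow> bool" where
  "ok T Leaf = True"
| "ok T (Node l a r) = (if a \<in> T then ok T l \<and> ok T r else set_tree (Node l a r) \<inter> T = {})"

lemma ok_hang: "(T \<inter> \<Union> (set_tree ` hang T t) = {}) = ok T t"
  by (induction t) auto

lemma is_top_iff: "is_top T t \<longleftrightarrow> T \<noteq> {} \<and> T \<subseteq> set_tree t \<and> ok T t"
  unfolding is_top_def ok_hang ..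

lemma ok_disj: "set_tree t \<inter> T = {} \<Longrightarrow> ok T t"
  by (cases t) auto

lemma hang_disj: "set_tree t \<inter> T = {} \<Longrightarrow> hang T t = (if t = Leaf then {} else {t})"
  by (cases t) auto

lemma bst_step_I:
  assumes "x \<in> T" "T \<subseteq> set_tree t" "T \<subseteq> set_tree t'" "ok T t" "ok T t'"
    "hang T t' = hang T t" "inorder t' = inorder t"
  shows "bst_step t x T t'"
  using assms unfolding bst_step_def is_top_iff by auto

lemma bst_step_same:
  assumes "x \<in> T" "T \<subseteq> set_tree t" "ok T t"
  shows "bst_step t x T t"
  using assms unfolding bst_step_def is_top_iff by auto

lemma rot0:
  assumes T: "T = {k1,k2,k3,k4,k5}" and x: "x \<in> T"
   and d: "set_tree LA \<inter> T = {}" "set_tree R1 \<inter> T = {}" "set_tree L1 \<inter> T = {}" "set_tree RR \<inter> T = {}"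
  shows "bst_step (Node (Node Leaf k1 LA) k2 (Node (Node (Node Leaf k3 R1) k4 L1) k5 RR)) x T
                  (Node (Node (Node Leaf k1 (Node LA k2 Leaf)) k3 (Node R1 k4 L1)) k5 RR)"
  apply (rule bst_step_I)
  using x d by (auto simp: T ok_disj hang_disj)

lemma rot1:
  assumes T: "T = {k1,k2,k3,k4,k5,k6}" and x: "x \<in> T"
   and d: "set_tree A \<inter> T = {}" "set_tree RA \<inter> T = {}" "set_tree LA \<inter> T = {}"
     "set_tree R1 \<inter> T = {}" "set_tree L1 \<inter> T = {}" "set_tree RR \<inter> T = {}"
  shows "bst_step (Node (Node A k1 (Node RA k2 LA)) k3 (Node (Node (Node Leaf k4 R1) k5 L1) k6 RR)) x T
                  (Node (Node (Node A k1 (Node RA k2 (Node LA k3 Leaf))) k4 (Node R1 k5 L1)) k6 RR)"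
  apply (rule bst_step_I)
  using x d by (auto simp: T ok_disj hang_disj)

section \<open>Concrete trees\<close>

fun rpi :: "nat \<Rightarrow> nat \<Rightarrow> nat tree" where
  "rpi a 0 = Leaf" | "rpi a (Suc k) = Node Leaf a (rpi (Suc a) k)"
fun lpi :: "nat \<Rightarrow> nat \<Rightarrow> nat tree" where
  "lpi a 0 = Leaf" | "lpi a (Suc k) = Node (lpi a k) (a+k) Leaf"

definition Gp :: "nat \<Rightarrow> nat \<Rightarrow> nat \<Rightarrow> nat tree" where
  "Gp l j q = Node (rpi (q*l+j+1-l) (if q=0 then 0 else l-j)) (q*l+1) (lpi (q*l+2) (j-2))"

function Rsp :: "nat \<Rightarrow> nat \<Rightarrow> nat \<Rightarrow> nat tree" where
  "Rsp l j q = (if q < l then Node (Gp l j q) (q*l+j) (Rsp l j (Suc q)) else rpi (l*l+j+1-l) (l-j))"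
  by pat_completeness auto
termination by (relation "measure (\<lambda>(l,j,q). l - q)") auto
declare Rsp.simps[simp del]

definition Mix :: "nat \<Rightarrow> nat \<Rightarrow> nat \<Rightarrow> nat tree" where
  "Mix l j i = Node (rpi (i*l+j+2-l) (l-j-1)) (i*l+1) (lpi (i*l+2) (j-2))"

fun LL :: "nat \<Rightarrow> nat \<Rightarrow> nat \<Rightarrow> nat tree" where
  "LL l j 0 = Gp l (Suc j) 0"
| "LL l j (Suc q) = Node (LL l j q) (q*l+j+1) (Gp l (Suc j) (Suc q))"

fun Lft :: "nat \<Rightarrow> nat \<Rightarrow> nat \<Rightarrow> nat tree" where
  "Lft l j 0 = Gp l j 0"
| "Lft l j (Suc i) = Node (LL l j i) (i*l+j+1) (Mix l j (Suc i))"

definition Tr :: "nat \<Rightarrow> nat \<Rightarrow> nat \<Rightarrow> nat tree" where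
  "Tr l j i = Node (Lft l j i) (i*l+j) (Rsp l j (Suc i))"

lemma Rsp_lt: "q < l \<Longrightarrow> Rsp l j q = Node (Gp l j q) (q*l+j) (Rsp l j (Suc q))"
  by (simp add: Rsp.simps)
lemma Rsp_ge: "\<not> q < l \<Longrightarrow> Rsp l j q = rpi (l*l+j+1-l) (l-j)"
  by (simp add: Rsp.simps)

lemma inorder_rpi: "inorder (rpi a k) = [a..<a+k]"
  by (induction k arbitrary: a) (auto simp: upt_conv_Cons)
lemma inorder_lpi: "inorder (lpi a k) = [a..<a+k]"
  by (induction k) auto

lemma upt_app: "a \<le> b \<Longrightarrow> b \<le> c \<Longrightarrow> [a..<b] @ [b..<c] = [a..<c]"
  by (metis upt_add_eq_append le_add_diff_inverse)
lemma upt_app1: "a \<le> b \<Longrightarrow> b < c \<Longrightarrow> [a..<b] @ b # [Suc b..<c] = [a..<c]"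
  by (metis upt_app upt_conv_Cons less_imp_le)

lemma upt_app1': "a \<le> b \<Longrightarrow> b < c \<Longrightarrow> b' = Suc b \<Longrightarrow> [a..<b] @ b # [b'..<c] = [a..<c]"
  using upt_app1 by blast

lemma mult_le_l: "(k::nat) \<ge> 1 \<Longrightarrow> l \<le> k * l"
  by simp

lemma inorder_Gp: assumes "2 \<le> j" "j \<le> l"
  shows "inorder (Gp l j q) = [(if q = 0 then 1 else q*l+j+1-l)..<q*l+j]"
proof (cases "q = 0")
  case True
  have "2 + (j-2) = j" using assms by simp
  then show ?thesis using True assms upt_app1[of 1 1 j]
    by (simp add: Gp_def inorder_rpi inorder_lpi del: upt_Suc)
next
  case False
  have "l \<le> q*l" using False by simp
  then have e: "q*l+j+1-l + (l-j) = q*l+1" using assms by arith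
  have e2: "q*l+2+(j-2) = q*l+j" using assms by simp
  have "inorder (Gp l j q) = [q*l+j+1-l..<q*l+1] @ (q*l+1) # [q*l+2..<q*l+j]"
    using False unfolding Gp_def by (simp only: inorder.simps inorder_rpi inorder_lpi e e2 if_False
       append_Nil append_Cons append_assoc)
  also have "\<dots> = [q*l+j+1-l..<q*l+j]"
    by (rule upt_app1') (use assms \<open>l \<le> q*l\<close> in arith)+
  finally show ?thesis using False by simp
qed

lemma lt_mult: "(k'::nat) < k \<Longrightarrow> k'*l + l \<le> k*l"
proof -
  assume "k' < k" hence "Suc k' * l \<le> k * l" by (intro mult_le_mono1) simp
  thus ?thesis by simp
qed

lemma inorder_Rsp: assumes "2 \<le> j" "j \<le> l" "1 \<le> q" "q \<le> l"
  shows "inorder (Rsp l j q) = [q*l+j+1-l..<l*l+1]"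
  using assms
proof (induction "l - q" arbitrary: q)
  case 0
  then have q: "q = l" by simp
  have "l \<le> l*l" using 0 by simp
  then have e: "l*l+j+1-l + (l-j) = l*l+1" using 0 by arith
  have "Rsp l j q = rpi (l*l+j+1-l) (l-j)" using q by (simp add: Rsp_ge)
  then have "inorder (Rsp l j q) = [l*l+j+1-l..<l*l+j+1-l+(l-j)]" by (simp only: inorder_rpi)
  then show ?case using q by (simp only: e)
next
  case (Suc d)
  then have ql: "q < l" by simp
  have "q*l + l \<le> l*l" using lt_mult[OF ql] .
  have "inorder (Rsp l j q) = [q*l+j+1-l..<q*l+j] @ (q*l+j) # [Suc q*l+j+1-l..<l*l+1]"
    using Suc.hyps(1)[of "Suc q"] Suc.hyps(2) Suc.prems ql
    by (simp add: Rsp_lt[OF ql] inorder_Gp del: upt_Suc)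
  also have "\<dots> = [q*l+j+1-l..<l*l+1]"
    apply (rule upt_app1')
    subgoal using Suc.prems by arith
    subgoal using Suc.prems \<open>q*l + l \<le> l*l\<close> by arith
    subgoal by simp
    done
  finally show ?case .
qed

lemma inorder_Mix: assumes "2 \<le> j" "j < l" "1 \<le> i"
  shows "inorder (Mix l j i) = [i*l+j+2-l..<i*l+j]"
proof -
  have "l \<le> i*l" using assms by simp
  then have e: "i*l+j+2-l + (l-j-1) = i*l+1" using assms by arith
  have e2: "i*l+2+(j-2) = i*l+j" using assms by simp
  have "inorder (Mix l j i) = [i*l+j+2-l..<i*l+1] @ (i*l+1) # [i*l+2..<i*l+j]"
    unfolding Mix_def by (simp only: inorder.simps inorder_rpi inorder_lpi e e2
       append_Nil append_Cons append_assoc)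
  also have "\<dots> = [i*l+j+2-l..<i*l+j]"
    by (rule upt_app1') (use assms \<open>l \<le> i*l\<close> in arith)+
  finally show ?thesis .
qed

lemma inorder_LL: assumes "2 \<le> j" "j < l"
  shows "inorder (LL l j q) = [1..<q*l+j+1]"
proof (induction q)
  case 0
  then show ?case using assms by (simp add: inorder_Gp)
next
  case (Suc q)
  have "inorder (LL l j (Suc q)) = [1..<q*l+j+1] @ (q*l+j+1) # [Suc (q*l+j+1)..<Suc q*l+Suc j]"
    using Suc assms by (simp add: inorder_Gp del: upt_Suc)
  also have "\<dots> = [1..<Suc q*l+j+1]" using assms by (subst upt_app1) auto
  finally show ?case .
qed

lemma inorder_Lft: assumes "2 \<le> j" "j < l"
  shows "inorder (Lft l j i) = [1..<i*l+j]"
proof (cases i)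
  case 0
  then show ?thesis using assms by (simp add: inorder_Gp)
next
  case (Suc i')
  have "inorder (Lft l j i) = [1..<i'*l+j+1] @ (i'*l+j+1) # [Suc (i'*l+j+1)..<i*l+j]"
    using Suc assms by (simp add: inorder_LL inorder_Mix del: upt_Suc)
  also have "\<dots> = [1..<i*l+j]" using assms Suc by (subst upt_app1) auto
  finally show ?thesis .
qed

lemma inorder_Tr: assumes "2 \<le> j" "j < l" "i < l"
  shows "inorder (Tr l j i) = [1..<l*l+1]"
proof -
  have "i*l + l \<le> l*l" using lt_mult[OF assms(3)] .
  have "inorder (Tr l j i) = [1..<i*l+j] @ (i*l+j) # [Suc (i*l+j)..<l*l+1]"
    unfolding Tr_def using assms by (simp add: inorder_Lft inorder_Rsp del: upt_Suc)
  also have "\<dots> = [1..<l*l+1]" using assms \<open>i*l + l \<le> l*l\<close> by (subst upt_app1) auto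
  finally show ?thesis .
qed

lemma inorder_Tr0: assumes "2 \<le> j" "j \<le> l"
  shows "inorder (Tr l j 0) = [1..<l*l+1]"
proof -
  have "l \<le> l*l" using assms by simp
  have "inorder (Tr l j 0) = [1..<j] @ j # [Suc j..<l*l+1]"
    unfolding Tr_def using assms by (simp add: inorder_Gp inorder_Rsp del: upt_Suc)
  also have "\<dots> = [1..<l*l+1]" by (rule upt_app1) (use assms \<open>l \<le> l*l\<close> in linarith)+
  finally show ?thesis .
qed

lemma set_rpi: "set_tree (rpi a k) = {a..<a+k}"
  by (simp flip: set_inorder add: inorder_rpi)
lemma set_lpi: "set_tree (lpi a k) = {a..<a+k}"
  by (simp flip: set_inorder add: inorder_lpi)
lemma set_Gp: "2 \<le> j \<Longrightarrow> j \<le> l \<Longrightarrow> set_tree (Gp l j k) \<subseteq> {k*l+j+1-l..<k*l+j}"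
  by (auto simp flip: set_inorder simp add: inorder_Gp split: if_splits)
lemma set_Rsp: assumes "2 \<le> j" "j \<le> l" "1 \<le> q" "q \<le> l"
  shows "set_tree (Rsp l j q) = {q*l+j+1-l..<l*l+1}"
  unfolding set_inorder[symmetric] inorder_Rsp[OF assms] set_upt ..
lemma set_LL: assumes "2 \<le> j" "j < l" shows "set_tree (LL l j q) = {1..<q*l+j+1}"
  unfolding set_inorder[symmetric] inorder_LL[OF assms] set_upt ..
lemma set_Tr: assumes "2 \<le> j" "j < l" "i < l" shows "set_tree (Tr l j i) = {1..<l*l+1}"
  unfolding set_inorder[symmetric] inorder_Tr[OF assms] set_upt ..
lemma set_Tr0: assumes "2 \<le> j" "j \<le> l" shows "set_tree (Tr l j 0) = {1..<l*l+1}"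
  unfolding set_inorder[symmetric] inorder_Tr0[OF assms] set_upt ..

lemma disj_sub: "A \<subseteq> B \<Longrightarrow> B \<inter> T = {} \<Longrightarrow> A \<inter> T = {}"
  by blast

section \<open>Spines\<close>

lemma Gp_ne: "Gp l j k \<noteq> Leaf" by (simp add: Gp_def)

lemma Rsp_spine:
  assumes "q \<le> p" "p < l" "\<forall>k. q \<le> k \<and> k \<le> p \<longrightarrow> k*l+j \<in> T"
    "\<forall>k. q \<le> k \<and> k < p \<longrightarrow> set_tree (Gp l j k) \<inter> T = {}"
  shows "ok T (Rsp l j q) = (ok T (Gp l j p) \<and> ok T (Rsp l j (Suc p))) \<and>
         hang T (Rsp l j q) = (Gp l j ` {q..<p}) \<union> hang T (Gp l j p) \<union> hang T (Rsp l j (Suc p))"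
  using assms
proof (induction "p - q" arbitrary: q)
  case 0
  then have "q = p" by simp
  then show ?case using 0 by (simp add: Rsp_lt)
next
  case (Suc d)
  then have qp: "q < p" "q < l" by auto
  have IH: "ok T (Rsp l j (Suc q)) = (ok T (Gp l j p) \<and> ok T (Rsp l j (Suc p))) \<and>
         hang T (Rsp l j (Suc q)) = (Gp l j ` {Suc q..<p}) \<union> hang T (Gp l j p) \<union> hang T (Rsp l j (Suc p))"
    using Suc by (intro Suc.hyps) auto
  have d: "set_tree (Gp l j q) \<inter> T = {}" using Suc.prems qp by auto
  have r: "q*l+j \<in> T" using Suc.prems qp by auto
  have s: "{q..<p} = insert q {Suc q..<p}" using qp by auto
  show ?case using IH r ok_disj[OF d] hang_disj[OF d] Gp_ne[of l j q]
    by (simp add: Rsp_lt[OF qp(2)] s)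
qed

lemma LL_spine:
  assumes "\<forall>k. k < q \<longrightarrow> k*l+j+1 \<in> T" "\<forall>k. k \<le> q \<longrightarrow> set_tree (Gp l (Suc j) k) \<inter> T = {}"
  shows "ok T (LL l j q) \<and> hang T (LL l j q) = Gp l (Suc j) ` {..q}"
  using assms
proof (induction q)
  case 0
  then have d: "set_tree (Gp l (Suc j) 0) \<inter> T = {}" by auto
  show ?case using ok_disj[OF d] hang_disj[OF d] Gp_ne[of l "Suc j" 0] by simp
next
  case (Suc q)
  have d: "set_tree (Gp l (Suc j) (Suc q)) \<inter> T = {}" using Suc.prems by auto
  have s: "{..Suc q} = insert (Suc q) {..q}" by auto
  show ?case using Suc ok_disj[OF d] hang_disj[OF d] Gp_ne[of l "Suc j" "Suc q"]
    by (simp add: s)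
qed

section \<open>Concrete steps\<close>

lemma rpi_pos: "0 < k \<Longrightarrow> rpi a k = Node Leaf a (rpi (Suc a) (k-1))" by (cases k) auto
lemma lpi_pos: "0 < k \<Longrightarrow> lpi a k = Node (lpi a (k-1)) (a+k-1) Leaf" by (cases k) auto

lemma step_mid:
  assumes j: "2 \<le> j" "j < l" and i: "i = Suc i'" "Suc i < l"
  shows "bst_step (Tr l j i) (i*l+j) {i'*l+j+1, i*l+1, i*l+j, i*l+j+1, Suc i*l+1, Suc i*l+j} (Tr l j (Suc i))"
proof -
  have ea: "Suc i*l+j+1-l = i*l+j+1" by simp
  have eb: "rpi (i*l+j+1) (l-j) = Node Leaf (i*l+j+1) (rpi (Suc (i*l+j+1)) (l-j-1))"
    using j by (simp add: rpi_pos)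
  have ec: "Suc i*l+j+2-l = Suc (i*l+j+1)" by simp
  have ed: "lpi (i*l+2) (j-1) = Node (lpi (i*l+2) (j-2)) (i*l+j) Leaf"
  proof -
    have "j - 1 = Suc (j-2)" "i*l+2+(j-2) = i*l+j" using j by simp_all
    then show ?thesis by (simp only: lpi.simps)
  qed
  have e1: "Tr l j i = Node (Node (LL l j i') (i'*l+j+1) (Node (rpi (i*l+j+2-l) (l-j-1)) (i*l+1) (lpi (i*l+2) (j-2)))) (i*l+j)
     (Node (Node (Node Leaf (i*l+j+1) (rpi (Suc (i*l+j+1)) (l-j-1))) (Suc i*l+1) (lpi (Suc i*l+2) (j-2))) (Suc i*l+j) (Rsp l j (Suc (Suc i))))"
    unfolding Tr_def i(1) Lft.simps Mix_def Rsp_lt[OF i(2)[unfolded i(1)]] Gp_def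
    by (simp only: ea[unfolded i(1)] eb[unfolded i(1)] if_False nat.distinct)
  have e2: "Tr l j (Suc i) = Node (Node (Node (LL l j i') (i'*l+j+1) (Node (rpi (i*l+j+2-l) (l-j-1)) (i*l+1) (Node (lpi (i*l+2) (j-2)) (i*l+j) Leaf))) (i*l+j+1)
       (Node (rpi (Suc (i*l+j+1)) (l-j-1)) (Suc i*l+1) (lpi (Suc i*l+2) (j-2)))) (Suc i*l+j) (Rsp l j (Suc (Suc i)))"
  proof -
    have g: "Gp l (Suc j) i = Node (rpi (i*l+j+2-l) (l-j-1)) (i*l+1) (lpi (i*l+2) (j-1))"
      unfolding Gp_def using i by (simp add: numeral_2_eq_2)
    show ?thesis
      unfolding Tr_def i(1) Lft.simps LL.simps Mix_def g[unfolded i(1)] ed[unfolded i(1)] ec[unfolded i(1)] ..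
  qed
  show ?thesis
    unfolding e1 e2
  proof (rule rot1[OF refl])
    have il: "i*l = l + i'*l" "Suc i * l = l + l + i'*l" using i by simp_all
    have s2: "Suc (Suc i) \<le> l" using i by simp
    show "set_tree (LL l j i') \<inter> {i'*l+j+1, i*l+1, i*l+j, i*l+j+1, Suc i*l+1, Suc i*l+j} = {}"
      using j by (simp add: set_LL il)
    show "set_tree (rpi (i*l+j+2-l) (l-j-1)) \<inter> {i'*l+j+1, i*l+1, i*l+j, i*l+j+1, Suc i*l+1, Suc i*l+j} = {}"
      using j by (simp add: set_rpi il)
    show "set_tree (lpi (i*l+2) (j-2)) \<inter> {i'*l+j+1, i*l+1, i*l+j, i*l+j+1, Suc i*l+1, Suc i*l+j} = {}"
      using j by (simp add: set_lpi il)
    show "set_tree (rpi (Suc (i*l+j+1)) (l-j-1)) \<inter> {i'*l+j+1, i*l+1, i*l+j, i*l+j+1, Suc i*l+1, Suc i*l+j} = {}"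
      using j by (simp add: set_rpi il)
    show "set_tree (lpi (Suc i*l+2) (j-2)) \<inter> {i'*l+j+1, i*l+1, i*l+j, i*l+j+1, Suc i*l+1, Suc i*l+j} = {}"
      using j by (simp add: set_lpi il)
    show "set_tree (Rsp l j (Suc (Suc i))) \<inter> {i'*l+j+1, i*l+1, i*l+j, i*l+j+1, Suc i*l+1, Suc i*l+j} = {}"
      using j s2 by (simp add: set_Rsp il)
  qed simp
qed

lemma step_zero:
  assumes j: "2 \<le> j" "j < l"
  shows "bst_step (Tr l j 0) j {1, j, j+1, l+1, l+j} (Tr l j 1)"
proof -
  have l1: "1 < l" using j by simp
  have g0: "Gp l j 0 = Node Leaf 1 (lpi 2 (j-2))"
    by (simp only: Gp_def mult_0 add_0 simp_thms(6) if_True rpi.simps(1))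
  have g1: "Gp l j 1 = Node (Node Leaf (j+1) (rpi (Suc (j+1)) (l-j-1))) (l+1) (lpi (l+2) (j-2))"
    using j by (simp add: Gp_def rpi_pos)
  have lp: "lpi 2 (j-1) = Node (lpi 2 (j-2)) j Leaf"
  proof -
    have "j - 1 = Suc (j-2)" "2+(j-2) = j" using j by simp_all
    then show ?thesis by (simp only: lpi.simps)
  qed
  have g0': "Gp l (Suc j) 0 = Node Leaf 1 (Node (lpi 2 (j-2)) j Leaf)"
  proof -
    have "Suc j - 2 = j - 1" using j by simp
    then show ?thesis using lp by (simp only: Gp_def mult_0 add_0 simp_thms(6) if_True rpi.simps(1))
  qed
  have m1: "Mix l j (Suc 0) = Node (rpi (Suc (j+1)) (l-j-1)) (l+1) (lpi (l+2) (j-2))"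
    using j by (simp add: Mix_def)
  have e1: "Tr l j 0 = Node (Node Leaf 1 (lpi 2 (j-2))) j (Node (Node (Node Leaf (j+1) (rpi (Suc (j+1)) (l-j-1))) (l+1) (lpi (l+2) (j-2))) (l+j) (Rsp l j 2))"
  proof -
    have r1: "Rsp l j (Suc 0) = Node (Gp l j 1) (l+j) (Rsp l j 2)"
      using Rsp_lt[OF l1, of j] by (simp add: numeral_2_eq_2)
    show ?thesis unfolding Tr_def Lft.simps r1 g0 g1 by simp
  qed
  have e2: "Tr l j 1 = Node (Node (Node Leaf 1 (Node (lpi 2 (j-2)) j Leaf)) (j+1) (Node (rpi (Suc (j+1)) (l-j-1)) (l+1) (lpi (l+2) (j-2)))) (l+j) (Rsp l j 2)"
    unfolding Tr_def One_nat_def Lft.simps LL.simps g0' m1 by (simp add: numeral_2_eq_2)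
  show ?thesis
    unfolding e1 e2
  proof (rule rot0[OF refl])
    have s2: "2 \<le> l" using j by simp
    show "set_tree (lpi 2 (j-2)) \<inter> {1, j, j+1, l+1, l+j} = {}"
      using j by (simp add: set_lpi)
    show "set_tree (rpi (Suc (j+1)) (l-j-1)) \<inter> {1, j, j+1, l+1, l+j} = {}"
      using j by (simp add: set_rpi)
    show "set_tree (lpi (l+2) (j-2)) \<inter> {1, j, j+1, l+1, l+j} = {}"
      using j by (simp add: set_lpi)
    show "set_tree (Rsp l j 2) \<inter> {1, j, j+1, l+1, l+j} = {}"
      using j s2 by (simp add: set_Rsp)
  qed simp
qed




lemma trans_abs:
  assumes "t = Node (Node A k1 (Node RA k2 LA)) k3 (Node Leaf k4 R1)"
    "k1 \<in> T" "k2 \<in> T" "k3 \<in> T" "k4 \<in> T"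
    "ok T A" "hang T A = X"
    "set_tree RA \<inter> T = {}" "set_tree LA \<inter> T = {}" "set_tree R1 \<inter> T = {}"
    "ok T t' = (ok T (Node RA k2 (Node LA k3 Leaf)) \<and> ok T R1)"
    "hang T t' = X \<union> hang T (Node RA k2 (Node LA k3 Leaf)) \<union> hang T R1"
  shows "ok T t \<and> ok T t' \<and> hang T t' = hang T t"
  using assms by (auto simp: ok_disj hang_disj)

lemma trans_disj:
  assumes j: "2 \<le> j" "j < l" and k: "k < l - 1"
  shows "set_tree (Gp l (Suc j) k) \<inter> ((\<lambda>q. q*l+j+1) ` {..<l} \<union> {(l-1)*l+1, (l-1)*l+j}) = {}"
proof -
  have sub: "set_tree (Gp l (Suc j) k) \<subseteq> {k*l+Suc j+1-l..<k*l+Suc j}" using j by (intro set_Gp) auto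
  have a: "k*l + l \<le> (l-1)*l" using lt_mult[OF k] .
  { fix q assume q: "q < l" "q*l+j+1 \<in> {k*l+Suc j+1-l..<k*l+Suc j}"
    have False
    proof (cases "q < k")
      case True then show ?thesis using lt_mult[OF True, of l] q by auto
    next
      case False then have "k*l \<le> q*l" by simp
      then show ?thesis using q by auto
    qed }
  moreover have "(l-1)*l+1 \<notin> {k*l+Suc j+1-l..<k*l+Suc j}" using a j by auto
  moreover have "(l-1)*l+j \<notin> {k*l+Suc j+1-l..<k*l+Suc j}" using a j by auto
  ultimately show ?thesis using sub by blast
qed

lemma step_trans:
  assumes j: "2 \<le> j" "j < l"
  shows "bst_step (Tr l j (l-1)) ((l-1)*l+j) ((\<lambda>q. q*l+j+1) ` {..<l} \<union> {(l-1)*l+1, (l-1)*l+j}) (Tr l (Suc j) 0)"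
proof -
  define T where "T = (\<lambda>q. q*l+j+1) ` {..<l} \<union> {(l-1)*l+1, (l-1)*l+j}"
  define i where "i = l - 1"
  define i' where "i' = l - 2"
  have i: "i = Suc i'" "Suc i = l" unfolding i_def i'_def using j by auto
  have il: "i*l + l = l*l"
  proof -
    have "Suc i * l = l * l" using i(2) by simp
    then show ?thesis by simp
  qed
  have RA: "set_tree (rpi (i*l+j+2-l) (l-j-1)) \<inter> T = {}"
  proof -
    have "i'*l + l = i*l" using i by simp
    moreover have "q*l+j+1 \<notin> {i*l+j+2-l..<i*l+j+2-l+(l-j-1)}" if "q < l" for q
    proof (cases "q < i")
      case True then have "q*l+l \<le> i*l" using lt_mult by blast
      then show ?thesis using j by auto
    next
      case False then have "q = i" using that i by simp
      moreover have "i*l = l + i'*l" using i by simp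
      ultimately show ?thesis using j by simp
    qed
    ultimately show ?thesis unfolding T_def set_rpi i_def[symmetric] using j by auto
  qed
  have LA: "set_tree (lpi (i*l+2) (j-2)) \<inter> T = {}"
  proof -
    have "q*l+j+1 \<notin> {i*l+2..<i*l+2+(j-2)}" if "q < l" for q
    proof (cases "q < i")
      case True then have "q*l+l \<le> i*l" using lt_mult by blast
      then show ?thesis using j by auto
    next
      case False then have "q = i" using that i by simp
      then show ?thesis using j by auto
    qed
    then show ?thesis unfolding T_def set_lpi i_def[symmetric] using j by auto
  qed
  have R1: "set_tree (rpi (Suc (i*l+j+1)) (l-j-1)) \<inter> T = {}"
  proof -
    have "q*l+j+1 \<notin> {Suc (i*l+j+1)..<Suc (i*l+j+1)+(l-j-1)}" if "q < l" for q
    proof -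
      have "q \<le> i" using that i by simp
      then have "q*l \<le> i*l" by (rule mult_le_mono1)
      then show ?thesis by (simp only: atLeastLessThan_iff) linarith
    qed
    then show ?thesis unfolding T_def set_rpi i_def[symmetric] using j by auto
  qed
  have DG: "set_tree (Gp l (Suc j) k) \<inter> T = {}" if "k < i" for k
    unfolding T_def by (rule trans_disj) (use j that i_def in auto)
  have mem: "q*l+j+1 \<in> T" if "q < l" for q unfolding T_def using that by auto
  have memi: "i*l+1 \<in> T" "i*l+j \<in> T" unfolding T_def i_def by auto
  have ed: "lpi (i*l+2) (j-1) = Node (lpi (i*l+2) (j-2)) (i*l+j) Leaf"
  proof -
    have "j - 1 = Suc (j-2)" "i*l+2+(j-2) = i*l+j" using j by simp_all
    then show ?thesis by (simp only: lpi.simps)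
  qed
  have e1: "Tr l j i = Node (Node (LL l j i') (i'*l+j+1) (Node (rpi (i*l+j+2-l) (l-j-1)) (i*l+1) (lpi (i*l+2) (j-2)))) (i*l+j)
     (Node Leaf (i*l+j+1) (rpi (Suc (i*l+j+1)) (l-j-1)))"
  proof -
    have r: "Rsp l j (Suc i) = Node Leaf (i*l+j+1) (rpi (Suc (i*l+j+1)) (l-j-1))"
    proof -
      have "l*l+j+1-l = i*l+j+1" using il by arith
      then show ?thesis using i(2) j by (simp add: Rsp_ge rpi_pos)
    qed
    show ?thesis unfolding Tr_def i(1) Lft.simps Mix_def r[unfolded i(1)] ..
  qed
  have g: "Gp l (Suc j) i = Node (rpi (i*l+j+2-l) (l-j-1)) (i*l+1) (Node (lpi (i*l+2) (j-2)) (i*l+j) Leaf)"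
    unfolding Gp_def ed[symmetric] using i by (simp add: numeral_2_eq_2)
  have r2: "Rsp l (Suc j) (Suc i) = rpi (Suc (i*l+j+1)) (l-j-1)"
  proof -
    have "l*l+Suc j+1-l = Suc (i*l+j+1)" using il by arith
    then show ?thesis using i(2) by (simp add: Rsp_ge)
  qed
  have e2: "Tr l (Suc j) 0 = Rsp l (Suc j) 0"
    using j by (simp add: Tr_def Rsp_lt)
  have SP: "ok T (Rsp l (Suc j) 0) = (ok T (Gp l (Suc j) i) \<and> ok T (Rsp l (Suc j) (Suc i))) \<and>
         hang T (Rsp l (Suc j) 0) = (Gp l (Suc j) ` {0..<i}) \<union> hang T (Gp l (Suc j) i) \<union> hang T (Rsp l (Suc j) (Suc i))"
    by (rule Rsp_spine) (use i mem DG in auto)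
  have LLs: "ok T (LL l j i') \<and> hang T (LL l j i') = Gp l (Suc j) ` {..i'}"
    by (rule LL_spine) (use i mem DG in auto)
  have iv: "{..i'} = {0..<i}" using i by auto
  have sT: "T \<subseteq> {1..<l*l+1}"
  proof -
    have "q*l+j+1 < l*l+1" if "q < l" for q using lt_mult[OF that, of l] j by simp
    moreover have "(l-1)*l+j < l*l+1" "(l-1)*l+1 < l*l+1" using il j i_def by auto
    ultimately show ?thesis unfolding T_def using j by auto
  qed
  have SP': "ok T (Rsp l (Suc j) 0) = (ok T (Node (rpi (i*l+j+2-l) (l-j-1)) (i*l+1) (Node (lpi (i*l+2) (j-2)) (i*l+j) Leaf)) \<and> ok T (rpi (Suc (i*l+j+1)) (l-j-1))) \<and>
         hang T (Rsp l (Suc j) 0) = (Gp l (Suc j) ` {..i'}) \<union> hang T (Node (rpi (i*l+j+2-l) (l-j-1)) (i*l+1) (Node (lpi (i*l+2) (j-2)) (i*l+j) Leaf)) \<union> hang T (rpi (Suc (i*l+j+1)) (l-j-1))"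
    using SP unfolding g r2 iv .
  have AB: "ok T (Tr l j i) \<and> ok T (Tr l (Suc j) 0) \<and> hang T (Tr l (Suc j) 0) = hang T (Tr l j i)"
    unfolding e2
    by (rule trans_abs[OF e1 mem[of i'] memi(1) memi(2) mem[of i] conjunct1[OF LLs] conjunct2[OF LLs] RA LA R1 conjunct1[OF SP'] conjunct2[OF SP']])
      (use i in auto)
  have "bst_step (Tr l j i) (i*l+j) T (Tr l (Suc j) 0)"
  proof (rule bst_step_I)
    show "i*l+j \<in> T" by (rule memi)
    show "T \<subseteq> set_tree (Tr l j i)" using sT j i by (simp add: set_Tr)
    show "T \<subseteq> set_tree (Tr l (Suc j) 0)" using sT j by (simp add: set_Tr0)
    show "ok T (Tr l j i)" "ok T (Tr l (Suc j) 0)" "hang T (Tr l (Suc j) 0) = hang T (Tr l j i)" using AB by auto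
    show "inorder (Tr l (Suc j) 0) = inorder (Tr l j i)" using j i by (simp add: inorder_Tr inorder_Tr0)
  qed
  then show ?thesis unfolding T_def i_def .
qed




lemma Tr0_Rsp: "0 < l \<Longrightarrow> Tr l j 0 = Rsp l j 0"
  by (simp add: Tr_def Rsp_lt)

lemma spine_disj:
  assumes j: "2 \<le> j" "j \<le> l" and k: "k < i" and q: "q \<le> i"
  shows "q*l+j \<notin> set_tree (Gp l j k)"
proof -
  have sub: "set_tree (Gp l j k) \<subseteq> {k*l+j+1-l..<k*l+j}" using set_Gp j by blast
  show ?thesis
  proof (cases "q < k")
    case True then have "q*l+l \<le> k*l" using lt_mult by blast
    then have "q*l+j \<notin> {k*l+j+1-l..<k*l+j}" by (simp only: atLeastLessThan_iff) arith
    then show ?thesis using sub by blast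
  next
    case False then have "k*l \<le> q*l" by (intro mult_le_mono1) simp
    then show ?thesis using sub by auto
  qed
qed

lemma step_col1:
  assumes l: "2 \<le> l" and i: "i < l"
  shows "bst_step (Tr l 2 0) (i*l+1) (insert (i*l+1) ((\<lambda>q. q*l+2) ` {..i})) (Tr l 2 0)"
proof (rule bst_step_same)
  define T where "T = insert (i*l+1) ((\<lambda>q. q*l+2) ` {..i})"
  show "i*l+1 \<in> insert (i*l+1) ((\<lambda>q. q*l+2) ` {..i})" by simp
  have il: "i*l + l \<le> l*l" using lt_mult[OF i] .
  show "insert (i*l+1) ((\<lambda>q. q*l+2) ` {..i}) \<subseteq> set_tree (Tr l 2 0)"
  proof -
    have "q*l+2 < l*l+1" if "q \<le> i" for q
    proof -
      have "q*l \<le> i*l" using that by (intro mult_le_mono1)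
      then show ?thesis using il l by linarith
    qed
    then show ?thesis using l il i by (auto simp: set_Tr0)
  qed
  have DG: "set_tree (Gp l 2 k) \<inter> T = {}" if "k < i" for k
  proof -
    have "i*l+1 \<notin> set_tree (Gp l 2 k)"
    proof -
      have "k*l+l \<le> i*l" using lt_mult that by blast
      moreover have "set_tree (Gp l 2 k) \<subseteq> {k*l+2+1-l..<k*l+2}" using set_Gp l by blast
      ultimately show ?thesis using l by auto
    qed
    then show ?thesis unfolding T_def using spine_disj[of 2 l k i] l that by auto
  qed
  have RS: "set_tree (Rsp l 2 (Suc i)) \<inter> T = {}"
  proof -
    have "q*l+2 < Suc i*l+2+1-l" if "q \<le> i" for q
    proof -
      have "q*l \<le> i*l" using that by (intro mult_le_mono1)
      moreover have "Suc i * l = l + i*l" by simp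
      ultimately show ?thesis by arith
    qed
    then have ub: "x < Suc i*l+2+1-l" if "x \<in> T" for x
      using that unfolding T_def by (auto simp: algebra_simps)
    have "set_tree (Rsp l 2 (Suc i)) = {Suc i*l+2+1-l..<l*l+1}" by (rule set_Rsp) (use l i in auto)
    then show ?thesis using ub by fastforce
  qed
  have RP: "set_tree (rpi (i*l+2+1-l) (if i=0 then 0 else l-2)) \<inter> T = {}"
  proof (cases "i = 0")
    case True then show ?thesis by simp
  next
    case False
    have "q*l+2 \<notin> {i*l+2+1-l..<i*l+2+1-l+(l-2)}" if "q \<le> i" for q
    proof (cases "q < i")
      case True then have "q*l+l \<le> i*l" using lt_mult by blast
      then show ?thesis using l by auto
    next
      case False then have "q = i" using that by simp
      moreover have "l \<le> i*l" using \<open>i \<noteq> 0\<close> by simp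
      ultimately show ?thesis using l by (simp only: atLeastLessThan_iff) linarith
    qed
    moreover have "i*l+1 \<notin> {i*l+2+1-l..<i*l+2+1-l+(l-2)}"
    proof -
      have "l \<le> i*l" using \<open>i \<noteq> 0\<close> by simp
      then show ?thesis using l by (simp only: atLeastLessThan_iff) linarith
    qed
    ultimately have "x \<notin> {i*l+2+1-l..<i*l+2+1-l+(l-2)}" if "x \<in> T" for x
      using that unfolding T_def by blast
    then show ?thesis unfolding set_rpi if_not_P[OF False] by blast
  qed
  have SP: "ok T (Rsp l 2 0) = (ok T (Gp l 2 i) \<and> ok T (Rsp l 2 (Suc i)))"
    using Rsp_spine[of 0 i l 2 T] i DG unfolding T_def by auto
  have "ok T (Gp l 2 i)" unfolding Gp_def using ok_disj[OF RP] by (simp add: T_def)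
  then show "ok (insert (i*l+1) ((\<lambda>q. q*l+2) ` {..i})) (Tr l 2 0)"
    using SP ok_disj[OF RS] l unfolding T_def by (simp add: Tr0_Rsp)
qed

lemma step_colL:
  assumes l: "2 \<le> l" and i: "i < l"
  shows "bst_step (Tr l l 0) (i*l+l) ((\<lambda>q. q*l+l) ` {..i}) (Tr l l 0)"
proof (rule bst_step_same)
  define T where "T = (\<lambda>q. q*l+l) ` {..i}"
  show "i*l+l \<in> (\<lambda>q. q*l+l) ` {..i}" by (intro image_eqI[where x=i]) auto
  have il: "i*l + l \<le> l*l" using lt_mult[OF i] .
  show "(\<lambda>q. q*l+l) ` {..i} \<subseteq> set_tree (Tr l l 0)"
  proof -
    have "q*l+l < l*l+1" if "q \<le> i" for q
    proof -
      have "q*l \<le> i*l" using that by (intro mult_le_mono1)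
      then show ?thesis using il l by linarith
    qed
    then show ?thesis using l il by (auto simp: set_Tr0)
  qed
  have DG: "set_tree (Gp l l k) \<inter> T = {}" if "k \<le> i" for k
  proof -
    have "q*l+l \<notin> set_tree (Gp l l k)" if "q \<le> i" for q
    proof -
      have sub: "set_tree (Gp l l k) \<subseteq> {k*l+l+1-l..<k*l+l}" using set_Gp l by blast
      show ?thesis
      proof (cases "q < k")
        case True then have "q*l+l \<le> k*l" using lt_mult by blast
        then show ?thesis using sub l by auto
      next
        case False then have "k*l \<le> q*l" by (intro mult_le_mono1) simp
        then show ?thesis using sub by auto
      qed
    qed
    then show ?thesis unfolding T_def by auto
  qed
  have RS: "set_tree (Rsp l l (Suc i)) \<inter> T = {}"
  proof -
    have "q*l+l < Suc i*l+l+1-l" if "q \<le> i" for q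
    proof -
      have "q*l \<le> i*l" using that by (intro mult_le_mono1)
      moreover have "Suc i * l = l + i*l" by simp
      ultimately show ?thesis by arith
    qed
    then have ub: "x < Suc i*l+l+1-l" if "x \<in> T" for x
      using that unfolding T_def by blast
    have "set_tree (Rsp l l (Suc i)) = {Suc i*l+l+1-l..<l*l+1}" by (rule set_Rsp) (use l i in auto)
    then show ?thesis using ub by fastforce
  qed
  have SP: "ok T (Rsp l l 0) = (ok T (Gp l l i) \<and> ok T (Rsp l l (Suc i)))"
    using Rsp_spine[of 0 i l l T] i DG unfolding T_def by auto
  then show "ok ((\<lambda>q. q*l+l) ` {..i}) (Tr l l 0)"
    using ok_disj[OF RS] ok_disj[OF DG[of i]] l unfolding T_def by (simp add: Tr0_Rsp)
qed




definition tre :: "nat \<Rightarrow> nat \<Rightarrow> nat \<Rightarrow> nat tree" where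
  "tre l c i = (if c = 0 then Tr l 2 0 else if Suc c < l then Tr l (Suc c) i else Tr l l 0)"

definition TS :: "nat \<Rightarrow> nat \<Rightarrow> nat \<Rightarrow> nat set" where
  "TS l c i = (let j = Suc c in if c = 0 then insert (i*l+1) ((\<lambda>q. q*l+2) ` {..i})
     else if j < l then (if i = 0 then {1, j, j+1, l+1, l+j}
       else if Suc i < l then {(i-1)*l+j+1, i*l+1, i*l+j, i*l+j+1, Suc i*l+1, Suc i*l+j}
       else (\<lambda>q. q*l+j+1) ` {..<l} \<union> {(l-1)*l+1, (l-1)*l+j})
     else (\<lambda>q. q*l+l) ` {..i})"

lemma step_ci:
  assumes l: "2 \<le> l" and c: "c < l" and i: "i < l"
  shows "bst_step (tre l c i) (i*l+c+1) (TS l c i)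
     (if Suc i < l then tre l c (Suc i) else tre l (Suc c) 0)"
proof -
  consider (c0) "c = 0" | (mid) "c \<noteq> 0" "Suc c < l" | (last) "c \<noteq> 0" "\<not> Suc c < l" by blast
  then show ?thesis
  proof cases
    case c0
    have "tre l c i = Tr l 2 0" "tre l c (Suc i) = Tr l 2 0" using c0 by (simp_all add: tre_def)
    moreover have "tre l (Suc c) 0 = Tr l 2 0" using c0 l by (cases "2 < l") (auto simp: tre_def numeral_2_eq_2 le_antisym)
    moreover have "TS l c i = insert (i*l+1) ((\<lambda>q. q*l+2) ` {..i})" using c0 by (simp add: TS_def)
    ultimately show ?thesis using step_col1[OF l i] c0 by simp
  next
    case mid
    define j where "j = Suc c"
    have j: "2 \<le> j" "j < l" using mid j_def by auto
    have key: "i*l+c+1 = i*l+j" using j_def by simp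
    have t0: "tre l c i = Tr l j i" using mid j_def by (simp add: tre_def)
    consider (i0) "i = 0" | (im) "i \<noteq> 0" "Suc i < l" | (il) "i \<noteq> 0" "\<not> Suc i < l" by blast
    then show ?thesis
    proof cases
      case i0
      have "TS l c i = {1, j, j+1, l+1, l+j}" using mid i0 j_def by (simp add: TS_def Let_def)
      moreover have "tre l c (Suc i) = Tr l j 1" using mid i0 j_def by (simp add: tre_def)
      moreover have "Suc i < l" using i0 j by simp
      ultimately show ?thesis unfolding key using step_zero[OF j] t0 i0 by simp
    next
      case im
      then obtain i' where i': "i = Suc i'" by (cases i) auto
      have "TS l c i = {i'*l+j+1, i*l+1, i*l+j, i*l+j+1, Suc i*l+1, Suc i*l+j}"
        using mid im i' j_def by (simp add: TS_def Let_def)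
      moreover have "tre l c (Suc i) = Tr l j (Suc i)" using mid j_def by (simp add: tre_def)
      ultimately show ?thesis unfolding key using step_mid[OF j i' im(2)] t0 im by simp
    next
      case il
      then have ie: "i = l - 1" using i by simp
      have "TS l c i = (\<lambda>q. q*l+j+1) ` {..<l} \<union> {(l-1)*l+1, (l-1)*l+j}"
        using mid il j_def by (simp add: TS_def Let_def)
      moreover have "tre l (Suc c) 0 = Tr l (Suc j) 0"
      proof (cases "Suc j < l")
        case True then show ?thesis using mid j_def by (simp add: tre_def)
      next
        case False then have "Suc j = l" using j by simp
        then show ?thesis using mid j_def by (simp add: tre_def)
      qed
      ultimately show ?thesis unfolding key using step_trans[OF j] t0 il ie by simp
    qed
  next
    case last
    then have cl: "c = l - 1" "Suc c = l" using c by auto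
    have key: "i*l+c+1 = i*l+l" using cl by simp
    have "tre l c i = Tr l l 0" "tre l c (Suc i) = Tr l l 0" "tre l (Suc c) 0 = Tr l l 0"
      using last cl by (simp_all add: tre_def)
    moreover have "TS l c i = (\<lambda>q. q*l+l) ` {..i}" using last cl by (simp add: TS_def Let_def)
    ultimately show ?thesis unfolding key using step_colL[OF l i] by simp
  qed
qed




definition tsf :: "nat \<Rightarrow> nat \<Rightarrow> nat tree" where
  "tsf l k = tre l (k div l) (k mod l)"
definition Tsf :: "nat \<Rightarrow> nat \<Rightarrow> nat set" where
  "Tsf l k = TS l (k div l) (k mod l)"

lemma tsf_Suc: assumes "0 < l"
  shows "tsf l (Suc k) = (if Suc (k mod l) < l then tre l (k div l) (Suc (k mod l)) else tre l (Suc (k div l)) 0)"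
proof (cases "Suc (k mod l) < l")
  case True
  then have "Suc k mod l = Suc (k mod l)" by (simp add: mod_Suc)
  moreover have "Suc k div l = k div l" using True by (simp add: div_Suc mod_Suc)
  ultimately show ?thesis using True by (simp add: tsf_def)
next
  case False
  then have e: "Suc (k mod l) = l" using assms mod_less_divisor[OF assms, of k] by simp
  then have "Suc k mod l = 0" by (simp add: mod_Suc)
  moreover have "Suc k div l = Suc (k div l)" using e by (simp add: div_Suc mod_Suc)
  ultimately show ?thesis using False by (simp add: tsf_def)
qed

lemma exec_ok: assumes l: "2 \<le> l"
  shows "bst_execution (l*l) (tilted_seq l) (map (tsf l) [0..<l*l+1]) (map (Tsf l) [0..<l*l])"
  unfolding bst_execution_def
proof (intro conjI allI impI)
  show "length (map (tsf l) [0..<l*l+1]) = length (tilted_seq l) + 1" by (simp add: tilted_seq_eq)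
  show "length (map (Tsf l) [0..<l*l]) = length (tilted_seq l)" by (simp add: tilted_seq_eq)
  have "tsf l 0 = Tr l 2 0" by (simp add: tsf_def tre_def)
  then show "inorder (map (tsf l) [0..<l*l+1] ! 0) = [1..<l*l+1]"
    using l by (simp add: inorder_Tr0 del: upt_Suc)
  fix k assume "k < length (tilted_seq l)"
  then have k: "k < l*l" by (simp add: tilted_seq_eq)
  have l0: "0 < l" using l by simp
  have c: "k div l < l" using k by (simp add: less_mult_imp_div_less)
  have i: "k mod l < l" using l0 by simp
  have "bst_step (tsf l k) (k mod l * l + k div l + 1) (Tsf l k) (tsf l (Suc k))"
    using step_ci[OF l c i] unfolding tsf_Suc[OF l0] by (simp add: tsf_def Tsf_def)
  then show "bst_step (map (tsf l) [0..<l*l+1] ! k) (tilted_seq l ! k) (map (Tsf l) [0..<l*l] ! k)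
     (map (tsf l) [0..<l*l+1] ! Suc k)"
    using k by (simp add: tilted_seq_eq nth_append del: upt_Suc)
qed

lemma card5: "card {a,b,c,d,e::nat} \<le> 5"
  using card_length[of "[a,b,c,d,e]"] by simp
lemma card6: "card {a,b,c,d,e,f::nat} \<le> 6"
  using card_length[of "[a,b,c,d,e,f]"] by simp

lemma card_TS: assumes l: "2 \<le> l" and c: "c < l" and i: "i < l"
  shows "card (TS l c i) \<le> 6 + (if Suc i = l then l+2 else 0) + (if c = 0 then l+2 else 0) + (if Suc c = l then l+2 else 0)"
proof -
  have im: "card (f ` {..i}) \<le> Suc i" for f :: "nat \<Rightarrow> nat"
    using card_image_le[of "{..i}" f] by simp
  consider (c0) "c = 0" | (mid) "c \<noteq> 0" "Suc c < l" | (last) "c \<noteq> 0" "\<not> Suc c < l" by blast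
  then show ?thesis
  proof cases
    case c0
    have "card (insert (i*l+1) ((\<lambda>q. q*l+2) ` {..i})) \<le> Suc (Suc i)"
      using im[of "\<lambda>q. q*l+2"] by (simp add: card_insert_if)
    then show ?thesis using c0 i by (simp add: TS_def)
  next
    case mid
    consider (i0) "i = 0" | (im) "i \<noteq> 0" "Suc i < l" | (il) "\<not> Suc i < l" by blast
    then show ?thesis
    proof cases
      case i0 then show ?thesis using mid card5 by (simp add: TS_def Let_def)
    next
      case im then show ?thesis using mid card6 by (simp add: TS_def Let_def)
    next
      case il
      have "card ((\<lambda>q. q*l+Suc c+1) ` {..<l} \<union> {(l-1)*l+1, (l-1)*l+Suc c}) \<le> l + 2"
      proof -
        have "card ((\<lambda>q. q*l+Suc c+1) ` {..<l}) \<le> l" using card_image_le[of "{..<l}"] by simp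
        moreover have "card {(l-1)*l+1, (l-1)*l+Suc c} \<le> 2" using card_length[of "[(l-1)*l+1, (l-1)*l+Suc c]"] by simp
        ultimately show ?thesis using card_Un_le[of "(\<lambda>q. q*l+Suc c+1) ` {..<l}" "{(l-1)*l+1, (l-1)*l+Suc c}"] by linarith
      qed
      moreover have "Suc i = l" using il i by simp
      ultimately show ?thesis using mid il by (simp add: TS_def Let_def)
    qed
  next
    case last
    then show ?thesis using im[of "\<lambda>q. q*l+l"] i c by (simp add: TS_def Let_def)
  qed
qed

lemma sum_nested: "(\<Sum>k<m*l. f k) = (\<Sum>c<m. \<Sum>i<l. f (c*l+i::nat))"
proof (induction m)
  case 0 then show ?case by simp
next
  case (Suc m)
  have "(\<Sum>k<Suc m*l. f k) = (\<Sum>k\<in>{0..<m*l}. f k) + (\<Sum>k\<in>{m*l..<m*l+l}. f k)"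
    by (simp add: lessThan_atLeast0 sum.atLeastLessThan_concat add.commute)
  also have "(\<Sum>k\<in>{m*l..<m*l+l}. f k) = (\<Sum>i<l. f (m*l+i))"
    using sum.shift_bounds_nat_ivl[of f 0 "m*l" l] by (simp add: lessThan_atLeast0 add.commute)
  finally show ?case using Suc by (simp add: lessThan_atLeast0)
qed

lemma sum_ind_last: "0 < l \<Longrightarrow> (\<Sum>i<l. if Suc i = l then a else 0) = (a::nat)"
proof -
  assume l: "0 < l"
  have "(\<Sum>i<l. if Suc i = l then a else 0) = (\<Sum>i<l. if i = l - 1 then a else 0)"
    by (rule sum.cong) auto
  also have "\<dots> = a" using l by (simp add: sum.delta)
  finally show ?thesis .
qed

lemma sum_ind_0': "(\<Sum>i<Suc m. if i = 0 then a else 0) = (a::nat)"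
  by (induction m) auto
lemma sum_ind_0: "0 < (l::nat) \<Longrightarrow> (\<Sum>i<l. if i = 0 then a else 0) = (a::nat)"
  using sum_ind_0'[of "l - 1" a] by simp

lemma cost_bound: assumes l: "2 \<le> l"
  shows "exec_cost (map (Tsf l) [0..<l*l]) \<le> 12 * (l*l)"
proof -
  have l0: "0 < l" using l by simp
  define X where "X c = (if c = 0 then l+2 else 0) + (if Suc c = l then l+2 else (0::nat))" for c
  define Y where "Y i = (if Suc i = l then l+2 else (0::nat))" for i
  have "exec_cost (map (Tsf l) [0..<l*l]) = (\<Sum>k<l*l. card (Tsf l k))"
    unfolding exec_cost_def map_map comp_def
    by (simp add: sum_set_upt_conv_sum_list_nat[symmetric] lessThan_atLeast0)
  also have "\<dots> = (\<Sum>c<l. \<Sum>i<l. card (Tsf l (c*l+i)))" by (rule sum_nested)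
  also have "\<dots> \<le> (\<Sum>c<l. \<Sum>i<l. 6 + Y i + X c)"
  proof (intro sum_mono)
    fix c i assume "c \<in> {..<l}" "i \<in> {..<l}"
    then have c: "c < l" and i: "i < l" by auto
    have "(c*l+i) div l = c" "(c*l+i) mod l = i" using i by auto
    then show "card (Tsf l (c*l+i)) \<le> 6 + Y i + X c"
      using card_TS[OF l c i] unfolding Tsf_def X_def Y_def by simp
  qed
  also have "\<dots> = (\<Sum>c<l. 6*l + (l+2) + l * X c)"
    by (simp add: sum.distrib Y_def sum_ind_last[OF l0])
  also have "\<dots> = l*(6*l+(l+2)) + l * ((l+2) + (l+2))"
  proof -
    have sX: "(\<Sum>c<l. X c) = (l+2)+(l+2)"
      unfolding X_def by (simp only: sum.distrib sum_ind_last[OF l0] sum_ind_0[OF l0])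
    have "(\<Sum>c<l. 6*l + (l+2) + l * X c) = (\<Sum>c<l. 6*l + (l+2)) + (\<Sum>c<l. l * X c)"
      by (rule sum.distrib)
    also have "\<dots> = l*(6*l+(l+2)) + l * (\<Sum>c<l. X c)"
      by (simp add: sum_distrib_left)
    finally have "(\<Sum>c<l. 6*l + (l+2) + l * X c) = l*(6*l+(l+2)) + l * (\<Sum>c<l. X c)" .
    then show ?thesis using sX by simp
  qed
  also have "\<dots> \<le> 12 * (l*l)"
  proof -
    have "6*l \<le> 3*(l*l)" using l by simp
    then show ?thesis by (simp add: algebra_simps)
  qed
  finally show ?thesis .
qed

lemma OPT_le: "bst_execution n S ts Ts \<Longrightarrow> OPT n S \<le> exec_cost Ts"
  unfolding OPT_def by (rule Least_le) blast

theorem mainTheorem11: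
  shows "\<exists>c::real. \<forall>l::nat. real (OPT (l^2) (tilted_seq l)) \<le> c * real (l^2)"
proof (intro exI allI)
  fix l :: nat
  consider "l = 0" | "l = 1" | "2 \<le> l" by linarith
  then show "real (OPT (l^2) (tilted_seq l)) \<le> 12 * real (l^2)"
  proof cases
    case 1
    have "bst_execution 0 [] [Leaf] []" by (simp add: bst_execution_def)
    then have "OPT 0 [] \<le> 0" using OPT_le[of 0 "[]" "[Leaf]" "[]"] by (simp add: exec_cost_def)
    then show ?thesis using 1 by (simp add: tilted_seq_eq)
  next
    case 2
    have s: "tilted_seq 1 = [1]" by (simp add: tilted_seq_eq)
    have "bst_step (Node Leaf 1 Leaf) 1 {1} (Node Leaf 1 Leaf)"
      by (rule bst_step_same) auto
    then have "bst_execution 1 [1] [Node Leaf 1 Leaf, Node Leaf 1 Leaf] [{1}]"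
      by (simp add: bst_execution_def)
    then have "OPT 1 [1] \<le> 1" using OPT_le by (fastforce simp: exec_cost_def)
    then show ?thesis using 2 s by simp
  next
    case 3
    have "OPT (l*l) (tilted_seq l) \<le> 12 * (l*l)"
      using OPT_le[OF exec_ok[OF 3]] cost_bound[OF 3] by linarith
    then have "real (OPT (l*l) (tilted_seq l)) \<le> real (12 * (l*l))" by linarith
    then show ?thesis by (simp add: power2_eq_square)
  qed
qed


end
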